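(* The class $\mathbf{GRLOWJ}$ is not closed under (1) intersection, (2) concatenation, and (3) reversal.
   Context: The reversal of a language $L$ is $L^R=\{w^R:w\in L\}$, where $(a_1\cdots a_n)^R=a_n\cdots a_1$. "Subword" means a contiguous factor. A GRLOWJFA is a tuple $\mathcal{A}=(\Sigma,Q,q_0,F,R)$ with $\Sigma$ a finite alphabet, $Q$ a finite state set, $q_0\in Q$, $F\subseteq Q$, and $R\subset Q\times\Sigma^+\times Q$ a finite set of rules such that for each $p\in Q$, $w\in\Sigma^+$ at most one $q$ has $(p,w,q)\in R$ (meaning: go from $p$ to $q$ deleting $w$). $\Sigma_p=\{w:(p,w,q)\in R\text{ for some }q\}$. Configurations lie in $\Sigma^*Q\Sigma^*$. Moves $\curvearrowright$: (1) for $t,u,v\in\Sigma^*$ and $(p,x,q)\in R$: $tpuxv\curvearrowright tuqv$ provided $u$ contains no word of $\Sigma_p$ as a subword and there are no $u_1,x_2\in\Sigma^*$, $u_2,x_1\in\Sigma^+$ with $u=u_1u_2$, $x=x_1x_2$, $u_2x_1=x$; (2) for $x\in\Sigma^+$, $y\in\Sigma^*$ with $y$ containing no word of $\Sigma_p$ as a subword: $xpy\curvearrowright pxy$. $L_{GRL}(\mathcal{A})=\{w\in\Sigma^*: q_0w\curvearrowright^* q_f \text{ for some } q_f\in F\}$. $\mathbf{GRLOWJ}$ is the class of languages so accepted. *)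

theory Defs
  imports Main "HOL-Library.Sublist"
begin

definition is_GRLOWJFA ::
  "'a set \<Rightarrow> nat set \<Rightarrow> nat \<Rightarrow> nat set \<Rightarrow> (nat \<times> 'a list \<times> nat) set \<Rightarrow> bool" where
  "is_GRLOWJFA \<Sigma> Q q0 F R \<longleftrightarrow>
     finite \<Sigma> \<and> finite Q \<and> q0 \<in> Q \<and> F \<subseteq> Q \<and> finite R \<and>
     R \<subseteq> Q \<times> (lists \<Sigma> - {[]}) \<times> Q \<and>
     (\<forall>p w q q'. (p, w, q) \<in> R \<longrightarrow> (p, w, q') \<in> R \<longrightarrow> q = q')"

definition Sigma_st :: "(nat \<times> 'a list \<times> nat) set \<Rightarrow> nat \<Rightarrow> 'a list set" where
  "Sigma_st R p = {w. \<exists>q. (p, w, q) \<in> R}"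

definition no_factor :: "'a list set \<Rightarrow> 'a list \<Rightarrow> bool" where
  "no_factor S u \<longleftrightarrow> \<not> (\<exists>w\<in>S. sublist w u)"

text \<open>Configurations t p v (in \<Sigma>* Q \<Sigma>*) are triples (t, p, v).\<close>

inductive grl_step :: "(nat \<times> 'a list \<times> nat) set \<Rightarrow>
    ('a list \<times> nat \<times> 'a list) \<Rightarrow> ('a list \<times> nat \<times> 'a list) \<Rightarrow> bool"
  for R where
  delete: "\<lbrakk> (p, x, q) \<in> R; no_factor (Sigma_st R p) u;
             \<not> (\<exists>u1 u2 x1 x2. u = u1 @ u2 \<and> x = x1 @ x2 \<and> u2 \<noteq> [] \<and> x1 \<noteq> [] \<and> u2 @ x1 = x) \<rbrakk>
           \<Longrightarrow> grl_step R (t, p, u @ x @ v) (t @ u, q, v)"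
| wrap: "\<lbrakk> x \<noteq> []; no_factor (Sigma_st R p) y \<rbrakk>
           \<Longrightarrow> grl_step R (x, p, y) ([], p, x @ y)"

definition L_GRL :: "'a set \<Rightarrow> nat \<Rightarrow> nat set \<Rightarrow> (nat \<times> 'a list \<times> nat) set \<Rightarrow> 'a list set" where
  "L_GRL \<Sigma> q0 F R = {w \<in> lists \<Sigma>. \<exists>qf\<in>F. (grl_step R)\<^sup>*\<^sup>* ([], q0, w) ([], qf, [])}"

definition GRLOWJ :: "'a list set set" where
  "GRLOWJ = {L. \<exists>\<Sigma> Q q0 F R. is_GRLOWJFA \<Sigma> Q q0 F R \<and> L = L_GRL \<Sigma> q0 F R}"

definition conc :: "'a list set \<Rightarrow> 'a list set \<Rightarrow> 'a list set" where
  "conc L1 L2 = {u @ v | u v. u \<in> L1 \<and> v \<in> L2}"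

end

theory Submission
  imports Defs "HOL-Library.Multiset"
begin



type_synonym rules = "(nat \<times> nat list \<times> nat) set"
type_synonym cfg = "nat list \<times> nat \<times> nat list"

inductive rpath :: "rules \<Rightarrow> nat \<Rightarrow> nat list list \<Rightarrow> nat \<Rightarrow> bool" for R where
  rpath_nil: "rpath R p [] p"
| rpath_cons: "(p, x, q) \<in> R \<Longrightarrow> rpath R q xs r \<Longrightarrow> rpath R p (x # xs) r"

inductive drun :: "rules \<Rightarrow> cfg \<Rightarrow> nat list list \<Rightarrow> cfg \<Rightarrow> bool" for R where
  drun_nil: "drun R C [] C"
| drun_cons: "\<lbrakk>(p, x, q) \<in> R; no_factor (Sigma_st R p) u;
    \<not> (\<exists>u1 u2 x1 x2. u = u1 @ u2 \<and> x = x1 @ x2 \<and> u2 \<noteq> [] \<and> x1 \<noteq> [] \<and> u2 @ x1 = x);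
    drun R (t @ u, q, v) xs C\<rbrakk> \<Longrightarrow> drun R (t, p, u @ x @ v) (x # xs) C"

lemma rpath_append: "rpath R p xs q \<Longrightarrow> rpath R q ys r \<Longrightarrow> rpath R p (xs @ ys) r"
  by (induction rule: rpath.induct) (auto intro: rpath.intros)

lemma rpath_split: "rpath R p (xs @ ys) r \<Longrightarrow> \<exists>q. rpath R p xs q \<and> rpath R q ys r"
proof (induction xs arbitrary: p)
  case Nil then show ?case by (auto intro: rpath.intros)
next
  case (Cons x xs)
  from Cons.prems obtain q where "(p, x, q) \<in> R" "rpath R q (xs @ ys) r"
    by (auto elim: rpath.cases)
  from Cons.IH[OF this(2)] obtain q' where "rpath R q xs q'" "rpath R q' ys r" by blast
  with \<open>(p, x, q) \<in> R\<close> show ?case by (auto intro: rpath.intros)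
qed

lemma rpath_single: "(p, x, q) \<in> R \<Longrightarrow> rpath R p [x] q"
  by (auto intro: rpath.intros)

lemma drun_steps: "drun R C xs C' \<Longrightarrow> (grl_step R)\<^sup>*\<^sup>* C C'"
proof (induction rule: drun.induct)
  case (drun_nil C) then show ?case by simp
next
  case (drun_cons p x q u t v xs C)
  have "grl_step R (t, p, u @ x @ v) (t @ u, q, v)"
    using drun_cons.hyps(1-3) by (rule grl_step.delete)
  from converse_rtranclp_into_rtranclp[OF this drun_cons.IH] show ?case .
qed

lemma drun_path: "drun R (t, p, y) xs (t', p', y') \<Longrightarrow> rpath R p xs p'"
proof (induction "(t, p, y)" xs "(t', p', y')" arbitrary: t p y rule: drun.induct)
  case drun_nil then show ?case by (auto intro: rpath.intros)
next
  case (drun_cons p x q u t v xs)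
  then show ?case by (auto intro: rpath.intros)
qed

lemma drun_mset: "drun R (t, p, y) xs (t', p', y') \<Longrightarrow>
   mset (t @ y) = mset (concat xs) + mset (t' @ y')"
proof (induction "(t, p, y)" xs "(t', p', y')" arbitrary: t p y rule: drun.induct)
  case drun_nil then show ?case by auto
next
  case (drun_cons p x q u t v xs)
  then show ?case by (simp add: algebra_simps)
qed

lemma drun_append: "drun R C (xs @ ys) C'' \<Longrightarrow> \<exists>C'. drun R C xs C' \<and> drun R C' ys C''"
proof (induction xs arbitrary: C)
  case Nil then show ?case by (intro exI[of _ C]) (auto intro: drun.intros)
next
  case (Cons x xs)
  from Cons.prems obtain p x' q u t v where
    h: "C = (t, p, u @ x' @ v)" "x' = x" "(p, x', q) \<in> R" "no_factor (Sigma_st R p) u"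
    "\<not> (\<exists>u1 u2 x1 x2. u = u1 @ u2 \<and> x' = x1 @ x2 \<and> u2 \<noteq> [] \<and> x1 \<noteq> [] \<and> u2 @ x1 = x')"
    "drun R (t @ u, q, v) (xs @ ys) C''"
    by (auto elim: drun.cases)
  from Cons.IH[OF h(6)] obtain C' where "drun R (t @ u, q, v) xs C'" "drun R C' ys C''" by blast
  moreover have "drun R C (x # xs) C'"
    unfolding h(1) h(2)[symmetric] by (rule drun.drun_cons) (use h calculation in auto)
  ultimately show ?case by blast
qed

lemma drun_ext: "drun R (t, p, y) xs (t', p', y') \<Longrightarrow> drun R (t, p, y @ S) xs (t', p', y' @ S)"
proof (induction "(t, p, y)" xs "(t', p', y')" arbitrary: t p y rule: drun.induct)
  case drun_nil then show ?case by (auto intro: drun.intros)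
next
  case (drun_cons p x q u t v xs)
  have "drun R (t, p, u @ x @ (v @ S)) (x # xs) (t', p', y' @ S)"
    by (rule drun.drun_cons) (use drun_cons in auto)
  then show ?case by simp
qed

lemma nf_nil: "[] \<notin> S \<Longrightarrow> no_factor S []"
  unfolding no_factor_def by auto

lemma front_step:
  assumes "(p, x, q) \<in> R" "[] \<notin> Sigma_st R p"
  shows "grl_step R (t, p, x @ v) (t, q, v)"
proof -
  have "grl_step R (t, p, [] @ x @ v) (t @ [], q, v)"
    by (rule grl_step.delete) (use assms nf_nil in auto)
  then show ?thesis by simp
qed

lemma front_run:
  assumes ne: "\<forall>(p, x, q)\<in>R. x \<noteq> []"
  shows "rpath R p xs q \<Longrightarrow> (grl_step R)\<^sup>*\<^sup>* (t, p, concat xs @ v) (t, q, v)"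
proof (induction rule: rpath.induct)
  case (rpath_nil p) then show ?case by simp
next
  case (rpath_cons p x q xs r)
  have "[] \<notin> Sigma_st R p" using ne unfolding Sigma_st_def by auto
  then have "grl_step R (t, p, x @ (concat xs @ v)) (t, q, concat xs @ v)"
    using rpath_cons(1) by (rule front_step[rotated])
  with rpath_cons.IH show ?case by (simp add: converse_rtranclp_into_rtranclp)
qed

lemma run_path: "(grl_step R)\<^sup>*\<^sup>* C C' \<Longrightarrow>
  \<exists>ys. rpath R (fst (snd C)) ys (fst (snd C')) \<and>
       mset (fst C @ snd (snd C)) = mset (concat ys) + mset (fst C' @ snd (snd C'))"
proof (induction rule: rtranclp_induct)
  case base then show ?case by (auto intro!: exI[of _ "[]"] rpath.intros)
next
  case (step C1 C2)
  then obtain ys where ys: "rpath R (fst (snd C)) ys (fst (snd C1))"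
    "mset (fst C @ snd (snd C)) = mset (concat ys) + mset (fst C1 @ snd (snd C1))" by blast
  from step.hyps(2) show ?case
  proof (cases rule: grl_step.cases)
    case (delete p x q u t v)
    have "rpath R (fst (snd C)) (ys @ [x]) (fst (snd C2))"
      using ys(1) delete by (auto intro: rpath_append rpath_single)
    moreover have "mset (fst C @ snd (snd C)) = mset (concat (ys @ [x])) + mset (fst C2 @ snd (snd C2))"
      using ys(2) delete by (simp add: algebra_simps)
    ultimately show ?thesis by blast
  next
    case (wrap x p y)
    then show ?thesis using ys by (auto simp: algebra_simps)
  qed
qed

lemma run_path':
  "(grl_step R)\<^sup>*\<^sup>* (t, p, y) (t', p', y') \<Longrightarrow>
   \<exists>ys. rpath R p ys p' \<and> mset (t @ y) = mset (concat ys) + mset (t' @ y')"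
  using run_path by fastforce

lemma dec_run:
  "(grl_step R)\<^sup>*\<^sup>* C E \<Longrightarrow> (\<exists>xs. drun R C xs E) \<or>
    (\<exists>xs t' s y'. drun R C xs (t', s, y') \<and> t' \<noteq> [] \<and> no_factor (Sigma_st R s) y' \<and>
       (grl_step R)\<^sup>*\<^sup>* ([], s, t' @ y') E)"
proof (induction rule: converse_rtranclp_induct)
  case base then show ?case by (blast intro: drun.intros)
next
  case (step C C1)
  from step.hyps(1) show ?case
  proof (cases rule: grl_step.cases)
    case (delete p x q u t v)
    from step.IH show ?thesis
    proof
      assume "\<exists>xs. drun R C1 xs E"
      then obtain xs where "drun R C1 xs E" by blast
      then have "drun R C (x # xs) E" unfolding delete(1)
        by (intro drun.drun_cons[OF delete(3) delete(4) delete(5)]) (use delete in simp)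
      then show ?thesis by blast
    next
      assume "\<exists>xs t' s y'. drun R C1 xs (t', s, y') \<and> t' \<noteq> [] \<and> no_factor (Sigma_st R s) y' \<and>
       (grl_step R)\<^sup>*\<^sup>* ([], s, t' @ y') E"
      then obtain xs t' s y' where h: "drun R C1 xs (t', s, y')" "t' \<noteq> []" "no_factor (Sigma_st R s) y'"
        "(grl_step R)\<^sup>*\<^sup>* ([], s, t' @ y') E" by blast
      then have "drun R C (x # xs) (t', s, y')" unfolding delete(1)
        by (intro drun.drun_cons[OF delete(3) delete(4) delete(5)]) (use delete in simp)
      with h show ?thesis by blast
    qed
  next
    case (wrap x p y)
    then show ?thesis using step.hyps(2) by (blast intro: drun.intros)
  qed
qed

lemma rpath_det:
  assumes det: "\<forall>p w q q'. (p, w, q) \<in> R \<longrightarrow> (p, w, q') \<in> R \<longrightarrow> q = q'"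
  shows "rpath R p xs q \<Longrightarrow> rpath R p xs q' \<Longrightarrow> q = q'"
proof (induction arbitrary: q' rule: rpath.induct)
  case (rpath_nil p) then show ?case by (auto elim: rpath.cases)
next
  case (rpath_cons p x q xs r)
  from rpath_cons.prems obtain q1 where "(p, x, q1) \<in> R" "rpath R q1 xs q'" by (auto elim: rpath.cases)
  with det rpath_cons show ?case by metis
qed

lemma rpath_in:
  assumes "\<forall>(p, x, q)\<in>R. p \<in> Q \<and> q \<in> Q"
  shows "rpath R p xs r \<Longrightarrow> p \<in> Q \<Longrightarrow> r \<in> Q"
  by (induction rule: rpath.induct) (use assms in auto)

lemma rpath_src:
  assumes "\<forall>(p, x, q)\<in>R. p \<in> Q \<and> q \<in> Q"
  shows "rpath R p xs r \<Longrightarrow> xs \<noteq> [] \<Longrightarrow> p \<in> Q \<and> r \<in> Q"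
proof (induction rule: rpath.induct)
  case (rpath_nil p) then show ?case by simp
next
  case (rpath_cons p x q xs r)
  then show ?case using assms rpath_in[OF assms] by blast
qed

lemma rpath_pigeon:
  assumes inQ: "\<forall>(p, x, q)\<in>R. p \<in> Q \<and> q \<in> Q" and fin: "finite Q"
    and det: "\<forall>p w q q'. (p, w, q) \<in> R \<longrightarrow> (p, w, q') \<in> R \<longrightarrow> q = q'"
    and pa: "rpath R p xs s" and len: "length xs \<ge> card Q" and pQ: "p \<in> Q"
  shows "\<exists>xs1 xs2 xs3 r. xs = xs1 @ xs2 @ xs3 \<and> xs2 \<noteq> [] \<and> rpath R p xs1 r \<and>
           rpath R r xs2 r \<and> rpath R r xs3 s"
proof -
  define f where "f k = (SOME r. rpath R p (take k xs) r \<and> rpath R r (drop k xs) s)" for k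
  have fk: "rpath R p (take k xs) (f k) \<and> rpath R (f k) (drop k xs) s" for k
  proof -
    have "\<exists>r. rpath R p (take k xs) r \<and> rpath R r (drop k xs) s"
      using rpath_split[of R p "take k xs" "drop k xs" s] pa by simp
    then show ?thesis unfolding f_def by (rule someI_ex)
  qed
  have fQ: "f k \<in> Q" for k using fk rpath_in[OF inQ] pQ by blast
  let ?A = "{0..length xs}"
  have "f ` ?A \<subseteq> Q" using fQ by blast
  then have "card (f ` ?A) \<le> card Q" by (rule card_mono[OF fin])
  also have "\<dots> < card ?A" using len by simp
  finally have "\<not> inj_on f ?A" by (rule pigeonhole)
  then obtain k1 k2 where k: "k1 \<in> ?A" "k2 \<in> ?A" "k1 \<noteq> k2" "f k1 = f k2"
    unfolding inj_on_def by blast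
  then obtain i j where ij: "i < j" "j \<le> length xs" "f i = f j"
    by (metis atLeastAtMost_iff linorder_neqE_nat)
  define r where "r = f i"
  define mid where "mid = take (j - i) (drop i xs)"
  have tj: "take j xs = take i xs @ mid"
    unfolding mid_def using ij by (metis le_add_diff_inverse less_imp_le_nat take_add)
  have p1: "rpath R p (take i xs) r" using fk r_def by blast
  have "rpath R p (take i xs @ mid) r" using fk[of j] ij(3) r_def tj by simp
  then obtain r' where r': "rpath R p (take i xs) r'" "rpath R r' mid r" using rpath_split by blast
  have "r' = r" using rpath_det[OF det r'(1) p1] .
  with r' have p2: "rpath R r mid r" by simp
  have p3: "rpath R r (drop j xs) s" using fk[of j] ij(3) r_def by simp
  have "xs = take i xs @ mid @ drop j xs"
    using tj by (metis append.assoc append_take_drop_id)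
  moreover have "mid \<noteq> []" unfolding mid_def using ij by simp
  ultimately show ?thesis using p1 p2 p3 by blast
qed




definition Ec :: "nat list set" where
  "Ec = {w @ [2] | w. set w \<subseteq> {0,1} \<and> count (mset w) 0 = count (mset w) 1}"

definition abcf :: "nat list \<Rightarrow> bool" where
  "abcf w \<longleftrightarrow> sorted w \<and> set w \<subseteq> {0,1,2} \<and> w \<noteq> [] \<and> last w = 2 \<and> count (mset w) 2 = 1"

lemma Ec_D:
  assumes "w \<in> Ec"
  shows "w \<noteq> [] \<and> last w = 2 \<and> count (mset w) 2 = 1 \<and> count (mset w) 0 = count (mset w) 1"
proof -
  obtain w0 where w: "w = w0 @ [2]" "set w0 \<subseteq> {0,1}" "count (mset w0) 0 = count (mset w0) 1"
    using assms unfolding Ec_def by blast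
  have "count (mset w0) 2 = 0" using w(2) by (auto simp: count_eq_zero_iff)
  then show ?thesis using w by simp
qed

lemma last_in_set_concat:
  assumes "cs \<noteq> []" "\<forall>x\<in>set cs. x \<noteq> []"
  shows "concat cs \<noteq> [] \<and> (\<exists>x\<in>set cs. last (concat cs) \<in> set x)"
proof -
  obtain cs' c where cs: "cs = cs' @ [c]" using assms(1) by (metis rev_exhaust)
  then have "c \<noteq> []" using assms(2) by auto
  then show ?thesis using cs by auto
qed

lemma abcf_del:
  assumes "abcf (a @ x @ b)" "2 \<notin> set x" "x \<noteq> []"
  shows "abcf (a @ b) \<and> abcf b"
proof -
  have s: "sorted a" "sorted x" "sorted b" "\<forall>i\<in>set a. \<forall>j\<in>set x. i \<le> j"
     "\<forall>i\<in>set a. \<forall>j\<in>set b. i \<le> j" "\<forall>i\<in>set x. \<forall>j\<in>set b. i \<le> j"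
    using assms(1) unfolding abcf_def by (auto simp: sorted_append)
  have bne: "b \<noteq> []"
  proof
    assume "b = []"
    then have "last (a @ x @ b) = last x" using assms(3) by simp
    then have "2 \<in> set x" using assms(1,3) unfolding abcf_def by (metis last_in_set)
    with assms(2) show False by simp
  qed
  have lb: "last b = 2" using bne assms(1) unfolding abcf_def by simp
  have "2 \<in> set b" using bne lb by (metis last_in_set)
  then have c1: "count (mset b) 2 \<ge> 1" by (simp add: Suc_le_eq)
  have cx: "count (mset x) 2 = 0" using assms(2) by (simp add: count_eq_zero_iff)
  have tot: "count (mset a) 2 + count (mset x) 2 + count (mset b) 2 = 1"
    using assms(1) unfolding abcf_def by simp
  have cb: "count (mset b) 2 = 1" using tot cx c1 by linarith
  have ca: "count (mset a) 2 = 0" using tot cx c1 by linarith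
  have "abcf b" unfolding abcf_def using s bne lb cb assms(1) unfolding abcf_def by auto
  moreover have "abcf (a @ b)" unfolding abcf_def using s bne lb cb ca assms(1)
    unfolding abcf_def by (auto simp: sorted_append)
  ultimately show ?thesis by blast
qed

lemma drun_labels: "drun R (t, p, y) xs C \<Longrightarrow> x \<in> set xs \<Longrightarrow> \<exists>a b. (a, x, b) \<in> R"
proof (induction "(t, p, y)" xs C arbitrary: t p y rule: drun.induct)
  case drun_nil then show ?case by simp
next
  case (drun_cons p x' q u t v xs C)
  then show ?case by auto
qed

lemma drun_abcf:
  assumes ne: "\<forall>(p, x, q)\<in>R. x \<noteq> []"
  shows "drun R (t, p, y) xs (t', s, y') \<Longrightarrow> \<forall>x\<in>set xs. 2 \<notin> set x \<Longrightarrow> abcf y \<Longrightarrow> abcf (t @ y)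
     \<Longrightarrow> abcf y' \<and> abcf (t' @ y')"
proof (induction "(t, p, y)" xs "(t', s, y')" arbitrary: t p y rule: drun.induct)
  case drun_nil then show ?case by simp
next
  case (drun_cons p x q u t v xs)
  have xne: "x \<noteq> []" using ne drun_cons.hyps(1) by auto
  have "abcf v" using abcf_del[of u x v] drun_cons xne by auto
  moreover have "abcf ((t @ u) @ v)" using abcf_del[of "t @ u" x v] drun_cons xne by auto
  ultimately show ?case using drun_cons by auto
qed

lemma drun_PB:
  "drun R (t, p, y) xs C \<Longrightarrow> set y \<subseteq> {1,2} \<Longrightarrow> \<forall>x\<in>set xs. 2 \<notin> set x \<Longrightarrow> \<forall>x\<in>set xs. set x \<subseteq> {1}"
proof (induction "(t, p, y)" xs C arbitrary: t p y rule: drun.induct)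
  case drun_nil then show ?case by simp
next
  case (drun_cons p x q u t v xs C)
  then show ?case by auto
qed

lemma drun_PS:
  assumes ne: "\<forall>(p, x, q)\<in>R. x \<noteq> []"
  shows "drun R (t, p, y) xs C \<Longrightarrow> abcf y \<Longrightarrow> \<forall>x\<in>set xs. 2 \<notin> set x \<Longrightarrow>
    \<exists>xs1 xm xs3. xs = xs1 @ xm @ xs3 \<and> length xm \<le> 1 \<and> (\<forall>x\<in>set xs1. set x \<subseteq> {0}) \<and>
        (\<forall>x\<in>set xs3. set x \<subseteq> {1})"
proof (induction "(t, p, y)" xs C arbitrary: t p y rule: drun.induct)
  case drun_nil then show ?case by (intro exI[of _ "[]"]) simp
next
  case (drun_cons p x q u t v xs C)
  have xne: "x \<noteq> []" using ne drun_cons.hyps(1) by auto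
  have av: "abcf v" using abcf_del[of u x v] drun_cons xne by auto
  show ?case
  proof (cases "1 \<in> set x")
    case True
    have "\<forall>j\<in>set v. 1 \<le> j" using drun_cons.prems(1) True unfolding abcf_def by (auto simp: sorted_append)
    moreover have "set v \<subseteq> {0,1,2}" using av unfolding abcf_def by simp
    ultimately have "set v \<subseteq> {1,2}" by auto
    then have "\<forall>x\<in>set xs. set x \<subseteq> {1}" using drun_PB[OF drun_cons.hyps(4)] drun_cons.prems(2) by simp
    then show ?thesis by (intro exI[of _ "[]"] exI[of _ "[x]"] exI[of _ xs]) simp
  next
    case False
    have "set x \<subseteq> {0,1,2}" using drun_cons.prems(1) unfolding abcf_def by auto
    then have x0: "set x \<subseteq> {0}" using False drun_cons.prems(2) by auto
    from drun_cons.hyps(5)[OF av] drun_cons.prems(2) obtain xs1 xm xs3 where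
      "xs = xs1 @ xm @ xs3" "length xm \<le> 1" "\<forall>x\<in>set xs1. set x \<subseteq> {0}" "\<forall>x\<in>set xs3. set x \<subseteq> {1}"
      by auto
    then show ?thesis using x0 by (intro exI[of _ "x # xs1"] exI[of _ xm] exI[of _ xs3]) simp
  qed
qed




locale ecm =
  fixes S :: "nat set" and Q :: "nat set" and q0 :: nat and F :: "nat set" and R :: rules
  assumes wf: "is_GRLOWJFA S Q q0 F R" and lang: "L_GRL S q0 F R = Ec"
begin

lemma wf': "finite S \<and> finite Q \<and> q0 \<in> Q \<and> F \<subseteq> Q \<and> finite R \<and>
     R \<subseteq> Q \<times> (lists S - {[]}) \<times> Q \<and>
     (\<forall>p w q q'. (p, w, q) \<in> R \<longrightarrow> (p, w, q') \<in> R \<longrightarrow> q = q')"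
  using wf unfolding is_GRLOWJFA_def .

lemma finQ: "finite Q" and q0Q: "q0 \<in> Q" and FQ: "F \<subseteq> Q" and finR: "finite R"
  and det: "\<forall>p w q q'. (p, w, q) \<in> R \<longrightarrow> (p, w, q') \<in> R \<longrightarrow> q = q'"
  using wf' by simp_all

lemma Rsub: "(p, x, q) \<in> R \<Longrightarrow> p \<in> Q \<and> q \<in> Q \<and> x \<noteq> [] \<and> set x \<subseteq> S"
proof -
  assume "(p, x, q) \<in> R"
  with wf' have "(p, x, q) \<in> Q \<times> (lists S - {[]}) \<times> Q" by blast
  then show ?thesis by auto
qed

lemma inQ: "\<forall>(p, x, q)\<in>R. p \<in> Q \<and> q \<in> Q"
  and ne: "\<forall>(p, x, q)\<in>R. x \<noteq> []"
  and labS: "\<forall>(p, x, q)\<in>R. set x \<subseteq> S"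
  using Rsub by auto

lemma Sig_ne: "[] \<notin> Sigma_st R p"
  using ne unfolding Sigma_st_def by auto

lemma nf_empty: "no_factor (Sigma_st R p) []"
  using Sig_ne nf_nil by blast

definition reach where "reach p \<longleftrightarrow> (\<exists>z. rpath R q0 z p)"
definition coreach where "coreach p \<longleftrightarrow> (\<exists>w qf. rpath R p w qf \<and> qf \<in> F)"
definition acc where "acc p T \<longleftrightarrow> (\<exists>qf\<in>F. (grl_step R)\<^sup>*\<^sup>* ([], p, T) ([], qf, []))"

lemma rpath_labS: "rpath R p xs q \<Longrightarrow> set (concat xs) \<subseteq> S"
  by (induction rule: rpath.induct) (use labS in auto)

lemma rpath_labels: "rpath R p xs q \<Longrightarrow> x \<in> set xs \<Longrightarrow> \<exists>a b. (a, x, b) \<in> R"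
  by (induction rule: rpath.induct) auto

lemma Kword: "rpath R q0 ys qf \<Longrightarrow> qf \<in> F \<Longrightarrow> concat ys \<in> Ec"
proof -
  assume a: "rpath R q0 ys qf" "qf \<in> F"
  have "(grl_step R)\<^sup>*\<^sup>* ([], q0, concat ys @ []) ([], qf, [])"
    using front_run[OF ne a(1)] .
  moreover have "concat ys \<in> lists S" using rpath_labS[OF a(1)] by auto
  ultimately have "concat ys \<in> L_GRL S q0 F R" unfolding L_GRL_def using a(2) by auto
  then show ?thesis using lang by simp
qed

lemma acc_coreach: "acc p T \<Longrightarrow> coreach p"
  unfolding acc_def coreach_def using run_path' by blast

lemma reach_Q: "reach p \<Longrightarrow> p \<in> Q"
  unfolding reach_def using rpath_in[OF inQ] q0Q by blast

lemma reach_step: "reach p \<Longrightarrow> rpath R p xs q \<Longrightarrow> reach q"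
  unfolding reach_def using rpath_append by blast

lemma coreach_step: "coreach q \<Longrightarrow> rpath R p xs q \<Longrightarrow> coreach p"
  unfolding coreach_def using rpath_append by blast

lemma UB:
  assumes "reach r" "coreach r" "rpath R r cyc r"
  shows "count (mset (concat cyc)) 2 = 0 \<and>
         count (mset (concat cyc)) 0 = count (mset (concat cyc)) 1"
proof -
  obtain z where z: "rpath R q0 z r" using assms(1) unfolding reach_def by blast
  obtain w qf where w: "rpath R r w qf" "qf \<in> F" using assms(2) unfolding coreach_def by blast
  have "concat (z @ w) \<in> Ec" using Kword[OF rpath_append[OF z w(1)] w(2)] .
  note k1 = Ec_D[OF this]
  have "concat (z @ cyc @ w) \<in> Ec"
    using Kword[OF rpath_append[OF z rpath_append[OF assms(3) w(1)]] w(2)] .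
  note k2 = Ec_D[OF this]
  have a: "count (mset (concat z)) 2 + count (mset (concat w)) 2 = 1"
    "count (mset (concat z)) 0 + count (mset (concat w)) 0 =
     count (mset (concat z)) 1 + count (mset (concat w)) 1" using k1 by simp_all
  have b: "count (mset (concat z)) 2 + count (mset (concat cyc)) 2 + count (mset (concat w)) 2 = 1"
    "count (mset (concat z)) 0 + count (mset (concat cyc)) 0 + count (mset (concat w)) 0 =
     count (mset (concat z)) 1 + count (mset (concat cyc)) 1 + count (mset (concat w)) 1"
    using k2 by simp_all
  from a b show ?thesis by linarith
qed

lemma CL:
  assumes "reach p" "drun R (t, p, y) (x # xs) (t', s, y')"
    "(grl_step R)\<^sup>*\<^sup>* (t', s, y') ([], qf, [])" "qf \<in> F" "2 \<in> set x"
  shows "xs = [] \<and> t' = [] \<and> y' = []"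
proof -
  obtain z where z: "rpath R q0 z p" using assms(1) unfolding reach_def by blast
  from assms(2) obtain u v q where h: "y = u @ x @ v" "(p, x, q) \<in> R"
    "drun R (t @ u, q, v) xs (t', s, y')" by (auto elim: drun.cases)
  have "(grl_step R)\<^sup>*\<^sup>* (t @ u, q, v) ([], qf, [])"
    using drun_steps[OF h(3)] assms(3) by simp
  then obtain ys where ys: "rpath R q ys qf" "mset ((t @ u) @ v) = mset (concat ys) + mset ([] @ [])"
    using run_path' by blast
  have "rpath R q0 (z @ [x] @ ys) qf"
    using rpath_append[OF z rpath_append[OF rpath_single[OF h(2)] ys(1)]] .
  from Ec_D[OF Kword[OF this assms(4)]]
  have k: "last (concat z @ x @ concat ys) = 2" "count (mset (concat z @ x @ concat ys)) 2 = 1"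
    by auto
  have "concat ys = []"
  proof (rule ccontr)
    assume "concat ys \<noteq> []"
    then have "last (concat ys) = 2" using k(1) by simp
    then have "2 \<in> set (concat ys)" using \<open>concat ys \<noteq> []\<close> by (metis last_in_set)
    then have "count (mset (concat ys)) 2 \<ge> 1" by (simp add: Suc_le_eq)
    moreover have "count (mset x) 2 \<ge> 1" using assms(5) by (simp add: Suc_le_eq)
    moreover have "count (mset (concat z @ x @ concat ys)) 2 =
      count (mset (concat z)) 2 + count (mset x) 2 + count (mset (concat ys)) 2" by simp
    ultimately show False using k(2) by linarith
  qed
  then have "mset ((t @ u) @ v) = {#}" using ys(2)
    by (metis append_Nil add.right_neutral mset.simps(1))
  then have "(t @ u) @ v = []" by (simp only: mset_zero_iff)
  then have "t @ u = [] \<and> v = []" by simp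
  then have "drun R ([], q, []) xs (t', s, y')" using h(3) by simp
  then show ?thesis by (cases rule: drun.cases) (use ne in auto)
qed

lemma CF:
  assumes "reach p" "drun R (t, p, y) xs (t', s, y')"
    "(grl_step R)\<^sup>*\<^sup>* (t', s, y') ([], qf, [])" "qf \<in> F" "t' \<noteq> [] \<or> y' \<noteq> []"
  shows "\<forall>x\<in>set xs. 2 \<notin> set x"
proof (rule ccontr)
  assume "\<not> ?thesis"
  then obtain x where x: "x \<in> set xs" "2 \<in> set x" by blast
  then obtain xs1 xs2 where xs: "xs = xs1 @ x # xs2" by (metis split_list)
  from drun_append[of R "(t, p, y)" xs1 "x # xs2" "(t', s, y')"] assms(2) xs
  obtain C0 where c0: "drun R (t, p, y) xs1 C0" "drun R C0 (x # xs2) (t', s, y')" by auto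
  obtain t0 p0 y0 where C0: "C0 = (t0, p0, y0)" by (cases C0)
  have "reach p0" using reach_step[OF assms(1) drun_path[OF c0(1)[unfolded C0]]] .
  from CL[OF this c0(2)[unfolded C0] assms(3,4) x(2)] assms(5) show False by simp
qed

lemma PA:
  assumes "reach p" "rpath R p xs s" "coreach s" "\<forall>x\<in>set xs. set x \<subseteq> {d}" "d \<in> {0,1}"
  shows "length xs < card Q"
proof (rule ccontr)
  assume "\<not> ?thesis"
  then have "length xs \<ge> card Q" by simp
  from rpath_pigeon[OF inQ finQ det assms(2) this reach_Q[OF assms(1)]]
  obtain xs1 xs2 xs3 r where h: "xs = xs1 @ xs2 @ xs3" "xs2 \<noteq> []" "rpath R p xs1 r"
    "rpath R r xs2 r" "rpath R r xs3 s" by blast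
  have "reach r" using reach_step[OF assms(1) h(3)] .
  moreover have "coreach r" using coreach_step[OF assms(3) h(5)] .
  ultimately have ub: "count (mset (concat xs2)) 0 = count (mset (concat xs2)) 1"
    using UB h(4) by blast
  have "\<forall>x\<in>set xs2. x \<noteq> []" using rpath_labels[OF h(4)] ne by fastforce
  from last_in_set_concat[OF h(2) this] have cne: "concat xs2 \<noteq> []" by blast
  have sd: "set (concat xs2) \<subseteq> {d}" using assms(4) h(1) by auto
  then have "d \<in> set (concat xs2)" using cne by (metis empty_iff insertE last_in_set subsetD)
  then have c1: "count (mset (concat xs2)) d \<ge> 1" by (simp add: Suc_le_eq)
  have c0: "count (mset (concat xs2)) (1 - d) = 0" using sd assms(5) by (auto simp: count_eq_zero_iff)
  from assms(5) have "d = 0 \<or> d = 1" by auto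
  then show False
  proof
    assume d0: "d = 0"
    have "1 \<le> count (mset (concat xs2)) 0" "count (mset (concat xs2)) 1 = 0"
      using c1 c0 d0 by (simp only:, simp only: diff_zero)
    with ub show False by linarith
  next
    assume d0: "d = 1"
    have "1 \<le> count (mset (concat xs2)) 1" "count (mset (concat xs2)) 0 = 0"
      using c1 c0 d0 by (simp only:, simp only: diff_self_eq_0)
    with ub show False by linarith
  qed
qed

end




context ecm begin

lemma FL:
  assumes rp: "reach p" and dr: "drun R ([], p, T) xs (t', s, y')" and t'ne: "t' \<noteq> []"
    and nf: "no_factor (Sigma_st R s) y'" and yne: "y' \<noteq> []" and yl: "last y' = 2"
    and cy: "rpath R s cyc s" and cne: "cyc \<noteq> []" and cf: "\<forall>x\<in>set cyc. 2 \<notin> set x"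
    and ac: "acc s (t' @ y')" and TS: "set T \<subseteq> S"
  shows False
proof -
  obtain z where z: "rpath R q0 z p" using rp unfolding reach_def by blast
  obtain x1 rest where cyc: "cyc = x1 # rest" using cne by (cases cyc) auto
  from cy obtain q1 where e1: "(s, x1, q1) \<in> R" and pr: "rpath R q1 rest s"
    unfolding cyc by (auto elim: rpath.cases)
  obtain qf where qf: "qf \<in> F" "(grl_step R)\<^sup>*\<^sup>* ([], s, t' @ y') ([], qf, [])"
    using ac unfolding acc_def by blast
  define I where "I = concat z @ T @ concat cyc"
  have r1: "(grl_step R)\<^sup>*\<^sup>* ([], q0, I) ([], p, T @ concat cyc)"
    unfolding I_def using front_run[OF ne z, of "[]" "T @ concat cyc"] by simp
  have r2: "(grl_step R)\<^sup>*\<^sup>* ([], p, T @ concat cyc) (t', s, y' @ concat cyc)"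
    using drun_steps[OF drun_ext[OF dr]] .
  have x1c: "2 \<notin> set x1" using cf cyc by simp
  have ov: "\<not> (\<exists>u1 u2 a b. y' = u1 @ u2 \<and> x1 = a @ b \<and> u2 \<noteq> [] \<and> a \<noteq> [] \<and> u2 @ a = x1)"
  proof
    assume "\<exists>u1 u2 a b. y' = u1 @ u2 \<and> x1 = a @ b \<and> u2 \<noteq> [] \<and> a \<noteq> [] \<and> u2 @ a = x1"
    then obtain u1 u2 a where h: "y' = u1 @ u2" "u2 \<noteq> []" "u2 @ a = x1" by blast
    then have "last u2 = 2" using yl by simp
    then have "2 \<in> set u2" using h(2) by (metis last_in_set)
    then have "2 \<in> set x1" using h(3) by auto
    with x1c show False by simp
  qed
  have "grl_step R (t', s, y' @ x1 @ concat rest) (t' @ y', q1, concat rest)"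
    by (rule grl_step.delete[OF e1 nf ov])
  then have r3: "grl_step R (t', s, y' @ concat cyc) (t' @ y', q1, concat rest)"
    unfolding cyc by simp
  have r4: "(grl_step R)\<^sup>*\<^sup>* (t' @ y', q1, concat rest) (t' @ y', s, [])"
    using front_run[OF ne pr, of "t' @ y'" "[]"] by simp
  have "grl_step R (t' @ y', s, []) ([], s, (t' @ y') @ [])"
    by (rule grl_step.wrap) (use t'ne nf_empty in auto)
  then have r5: "grl_step R (t' @ y', s, []) ([], s, t' @ y')" by simp
  have "(grl_step R)\<^sup>*\<^sup>* ([], q0, I) ([], qf, [])"
    using r1 r2 r3 r4 r5 qf(2)
    by (meson converse_rtranclp_into_rtranclp rtranclp_trans)
  moreover have "I \<in> lists S"
    unfolding I_def using rpath_labS[OF z] rpath_labS[OF cy] TS by auto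
  ultimately have "I \<in> L_GRL S q0 F R" unfolding L_GRL_def using qf(1) by auto
  then have "I \<in> Ec" using lang by simp
  then have lI: "last I = 2" using Ec_D by blast
  have "\<forall>x\<in>set cyc. x \<noteq> []" using rpath_labels[OF cy] ne by fastforce
  from last_in_set_concat[OF cne this] obtain x where
    "concat cyc \<noteq> []" "x \<in> set cyc" "last (concat cyc) \<in> set x" by blast
  moreover have "last I = last (concat cyc)" unfolding I_def using \<open>concat cyc \<noteq> []\<close> by simp
  ultimately show False using lI cf by auto
qed

lemma drun_len:
  assumes mb: "\<forall>(p, x, q)\<in>R. length x \<le> m"
  shows "drun R (t, p, y) xs (t', s, y') \<Longrightarrow> length (t @ y) \<le> m * length xs + length (t' @ y')"
proof (induction "(t, p, y)" xs "(t', s, y')" arbitrary: t p y rule: drun.induct)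
  case drun_nil then show ?case by simp
next
  case (drun_cons p x q u t v xs)
  have "length x \<le> m" using mb drun_cons.hyps(1) by auto
  with drun_cons.hyps(5) show ?case by simp
qed

lemma pass_bound:
  assumes rp: "reach p" and dr: "drun R (t, p, y) xs (t', s, y')" and cs: "coreach s"
    and ab: "abcf y" and cf: "\<forall>x\<in>set xs. 2 \<notin> set x"
  shows "length xs + 1 \<le> 2 * card Q"
proof -
  obtain xs1 xm xs3 where h: "xs = xs1 @ xm @ xs3" "length xm \<le> 1" "\<forall>x\<in>set xs1. set x \<subseteq> {0}"
    "\<forall>x\<in>set xs3. set x \<subseteq> {1}" using drun_PS[OF ne dr ab cf] by blast
  have pa: "rpath R p (xs1 @ xm @ xs3) s" using drun_path[OF dr] h(1) by simp
  then obtain r1 where p1: "rpath R p xs1 r1" "rpath R r1 (xm @ xs3) s" using rpath_split by blast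
  then obtain r2 where p2: "rpath R r1 xm r2" "rpath R r2 xs3 s" using rpath_split by blast
  have "coreach r1" using coreach_step[OF cs p1(2)] .
  then have l1: "length xs1 < card Q" using PA[OF rp p1(1) _ h(3)] by simp
  have "reach r2" using reach_step[OF reach_step[OF rp p1(1)] p2(1)] .
  then have l3: "length xs3 < card Q" using PA[OF _ p2(2) cs h(4)] by simp
  show ?thesis using h(1,2) l1 l3 by simp
qed

end




context ecm begin

lemma S012: "{0,1,2} \<subseteq> S"
proof -
  have "[0,1] @ [2] \<in> Ec" unfolding Ec_def by force
  then have "[0,1,2] \<in> L_GRL S q0 F R" using lang by simp
  then show ?thesis unfolding L_GRL_def by auto
qed

lemma H:
  assumes mb: "\<forall>(p, x, q)\<in>R. length x \<le> m"
  shows "V \<subseteq> Q \<Longrightarrow> p \<in> V \<Longrightarrow> (\<forall>v\<in>V. \<exists>ws. rpath R v ws p) \<Longrightarrow> reach p \<Longrightarrow> abcf T \<Longrightarrow> acc p T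
    \<Longrightarrow> length T \<le> (card Q - card V + 1) * (2 * card Q * m)"
proof (induction "card Q - card V" arbitrary: V p T rule: less_induct)
  case less
  define B where "B = 2 * card Q * m"
  have TS: "set T \<subseteq> S" using less.prems(5) S012 unfolding abcf_def by auto
  have Tne: "T \<noteq> []" using less.prems(5) unfolding abcf_def by simp
  obtain qf where qf: "qf \<in> F" and run: "(grl_step R)\<^sup>*\<^sup>* ([], p, T) ([], qf, [])"
    using less.prems(6) unfolding acc_def by blast
  have aT: "abcf ([] @ T)" using less.prems(5) by simp
  from dec_run[OF run] show ?case
  proof (elim disjE exE conjE)
    fix xs assume dr: "drun R ([], p, T) xs ([], qf, [])"
    have "xs \<noteq> []"
    proof
      assume "xs = []"
      with dr have "T = []" by (auto elim: drun.cases)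
      with Tne show False by simp
    qed
    then obtain xs' xl where xs: "xs = xs' @ [xl]" by (metis rev_exhaust)
    from drun_append[of R "([], p, T)" xs' "[xl]" "([], qf, [])"] dr xs
    obtain C1 where c1: "drun R ([], p, T) xs' C1" "drun R C1 [xl] ([], qf, [])" by auto
    obtain t1 s1 y1 where C1: "C1 = (t1, s1, y1)" by (cases C1)
    have y1: "y1 \<noteq> []" using c1(2) ne unfolding C1 by (auto elim: drun.cases)
    have st: "(grl_step R)\<^sup>*\<^sup>* (t1, s1, y1) ([], qf, [])" using drun_steps[OF c1(2)] C1 by simp
    have cf: "\<forall>x\<in>set xs'. 2 \<notin> set x"
      using CF[OF less.prems(4) c1(1)[unfolded C1] st qf] y1 by simp
    have "coreach s1" using run_path'[OF st] qf unfolding coreach_def by blast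
    from pass_bound[OF less.prems(4) c1(1)[unfolded C1] this less.prems(5) cf]
    have lx: "length xs \<le> 2 * card Q" using xs by simp
    have "length T \<le> m * length xs" using drun_len[OF mb dr] by simp
    also have "\<dots> \<le> m * (2 * card Q)" using lx by simp
    also have "\<dots> = B" unfolding B_def by simp
    also have "\<dots> \<le> (card Q - card V + 1) * B" by simp
    finally show ?thesis unfolding B_def .
  next
    fix xs t' s y'
    assume dr: "drun R ([], p, T) xs (t', s, y')" and t'ne: "t' \<noteq> []"
      and nf: "no_factor (Sigma_st R s) y'" and run2: "(grl_step R)\<^sup>*\<^sup>* ([], s, t' @ y') ([], qf, [])"
    have "grl_step R (t', s, y') ([], s, t' @ y')" by (rule grl_step.wrap[OF t'ne nf])
    then have st: "(grl_step R)\<^sup>*\<^sup>* (t', s, y') ([], qf, [])" using run2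
      by (rule converse_rtranclp_into_rtranclp)
    have cf: "\<forall>x\<in>set xs. 2 \<notin> set x" using CF[OF less.prems(4) dr st qf] t'ne by simp
    have acs: "acc s (t' @ y')" unfolding acc_def using run2 qf by blast
    have cs: "coreach s" using acc_coreach[OF acs] .
    have lx: "length xs + 1 \<le> 2 * card Q" using pass_bound[OF less.prems(4) dr cs less.prems(5) cf] .
    have ab: "abcf y' \<and> abcf (t' @ y')" using drun_abcf[OF ne dr cf less.prems(5) aT] .
    have "xs \<noteq> []"
    proof
      assume "xs = []"
      with dr have "t' = []" by (auto elim: drun.cases)
      with t'ne show False by simp
    qed
    have pa: "rpath R p xs s" using drun_path[OF dr] .
    have sQ: "s \<in> Q" using rpath_src[OF inQ pa \<open>xs \<noteq> []\<close>] by simp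
    have rs: "reach s" using reach_step[OF less.prems(4) pa] .
    have sV: "s \<notin> V"
    proof
      assume "s \<in> V"
      then obtain ws where ws: "rpath R s ws p" using less.prems(3) by blast
      have cy: "rpath R s (ws @ xs) s" using rpath_append[OF ws pa] .
      have cne: "ws @ xs \<noteq> []" using \<open>xs \<noteq> []\<close> by simp
      have "count (mset (concat (ws @ xs))) 2 = 0" using UB[OF rs cs cy] by blast
      then have cf2: "\<forall>x\<in>set (ws @ xs). 2 \<notin> set x" by (auto simp: count_eq_zero_iff)
      have yne: "y' \<noteq> []" and yl: "last y' = 2" using ab unfolding abcf_def by auto
      show False using FL[OF less.prems(4) dr t'ne nf yne yl cy cne cf2 acs TS] .
    qed
    define V' where "V' = insert s V"
    have finV: "finite V" using less.prems(1) finQ by (rule finite_subset)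
    have cV': "card V' = Suc (card V)" unfolding V'_def using finV sV by simp
    have V'Q: "V' \<subseteq> Q" unfolding V'_def using less.prems(1) sQ by simp
    have "card V' \<le> card Q" using card_mono[OF finQ V'Q] .
    then have lt: "card Q - card V' < card Q - card V" using cV' by simp
    have reachV': "\<forall>v\<in>V'. \<exists>ws. rpath R v ws s"
    proof
      fix v assume "v \<in> V'"
      then show "\<exists>ws. rpath R v ws s"
      proof (cases "v = s")
        case True then show ?thesis by (auto intro: rpath.intros)
      next
        case False
        with \<open>v \<in> V'\<close> have "v \<in> V" unfolding V'_def by simp
        then obtain ws where "rpath R v ws p" using less.prems(3) by blast
        then show ?thesis using rpath_append[OF _ pa] by blast
      qed
    qed
    have IH: "length (t' @ y') \<le> (card Q - card V' + 1) * B"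
      unfolding B_def
      by (rule less.hyps[OF lt V'Q _ reachV' rs _ acs]) (use ab V'_def in auto)
    have e: "card Q - card V' + 1 = card Q - card V" using cV' \<open>card V' \<le> card Q\<close> by simp
    have "length ([] @ T) \<le> m * length xs + length (t' @ y')" using drun_len[OF mb dr] .
    then have "length T \<le> m * length xs + length (t' @ y')" by simp
    also have "\<dots> \<le> m * (2 * card Q) + (card Q - card V) * B"
    proof (rule add_mono)
      show "m * length xs \<le> m * (2 * card Q)" using lx by simp
      have "(card Q - card V' + 1) * B = (card Q - card V) * B" using e by simp
      then show "length (t' @ y') \<le> (card Q - card V) * B" using IH by simp
    qed
    also have "\<dots> = (card Q - card V + 1) * B" unfolding B_def by (simp add: algebra_simps)
    finally show ?thesis unfolding B_def .
  qed
qed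

lemma contra: False
proof -
  define m where "m = Max (insert 0 ((\<lambda>(p, x, q). length x) ` R))"
  have mb: "\<forall>(p, x, q)\<in>R. length x \<le> m"
  proof (intro ballI, clarify)
    fix p x q assume "(p, x, q) \<in> R"
    then have "length x \<in> insert 0 ((\<lambda>(p, x, q). length x) ` R)" by force
    then show "length x \<le> m" unfolding m_def using finR by simp
  qed
  define n where "n = card Q * (2 * card Q * m)"
  define T0 where "T0 = replicate n 0 @ replicate n 1 @ [2::nat]"
  have "T0 \<in> Ec" unfolding Ec_def T0_def
    by (rule CollectI, rule exI[of _ "replicate n 0 @ replicate n 1"]) auto
  then have "T0 \<in> L_GRL S q0 F R" using lang by simp
  then have ac: "acc q0 T0" unfolding L_GRL_def acc_def by auto
  have ab: "abcf T0" unfolding abcf_def T0_def by (auto simp: sorted_append)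
  have cQ: "card Q \<ge> 1" using q0Q finQ by (metis One_nat_def Suc_leI card_gt_0_iff empty_iff)
  have "length T0 \<le> (card Q - card {q0} + 1) * (2 * card Q * m)"
    by (rule H[OF mb]) (use q0Q ac ab in \<open>auto simp: reach_def intro: rpath.intros\<close>)
  moreover have "card Q - card {q0} + 1 = card Q" using cQ by simp
  ultimately have "2 * n + 1 \<le> n" unfolding T0_def n_def by simp
  then show False by simp
qed

end

lemma Ec_notin: "Ec \<notin> GRLOWJ"
proof
  assume "Ec \<in> GRLOWJ"
  then obtain S Q q0 F R where "is_GRLOWJFA S Q q0 F (R :: rules)" "Ec = L_GRL S q0 F R"
    unfolding GRLOWJ_def by blast
  then interpret ecm S Q q0 F R by unfold_locales simp_all
  show False by (rule contra)
qed




definition Elang :: "nat list set" where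
  "Elang = {w. set w \<subseteq> {0,1} \<and> count (mset w) 0 = count (mset w) 1}"

lemma first_change:
  fixes y :: "nat list"
  shows "set y \<subseteq> {0,1} \<Longrightarrow> \<not> (\<exists>d. set y \<subseteq> {d}) \<Longrightarrow>
   \<exists>k d e v. y = replicate k d @ [d, e] @ v \<and> d \<noteq> e \<and> d \<in> {0,1} \<and> e \<in> {0,1}"
proof (induction y)
  case Nil then show ?case by simp
next
  case (Cons a y')
  show ?case
  proof (cases y')
    case Nil with Cons.prems show ?thesis by auto
  next
    case (Cons b y'')
    show ?thesis
    proof (cases "b = a")
      case False
      then show ?thesis using Cons Cons.prems
        by (intro exI[of _ 0] exI[of _ a] exI[of _ b] exI[of _ y'']) auto
    next
      case True
      have "\<not> (\<exists>d. set y' \<subseteq> {d})"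
      proof
        assume "\<exists>d. set y' \<subseteq> {d}"
        then obtain d where "set y' \<subseteq> {d}" by blast
        then have "d = a" using Cons True by auto
        with \<open>set y' \<subseteq> {d}\<close> have "set (a # y') \<subseteq> {a}" by auto
        with \<open>\<not> (\<exists>d. set (a # y') \<subseteq> {d})\<close> show False by blast
      qed
      moreover have "set y' \<subseteq> {0,1}" using \<open>set (a # y') \<subseteq> {0,1}\<close> by simp
      ultimately obtain k d e v where h: "y' = replicate k d @ [d, e] @ v" "d \<noteq> e" "d \<in> {0,1}" "e \<in> {0,1}"
        using \<open>set y' \<subseteq> {0,1} \<Longrightarrow> \<not> (\<exists>d. set y' \<subseteq> {d}) \<Longrightarrow> _\<close> by blast
      have "d = a"
      proof (cases k)
        case 0 then show ?thesis using h(1) Cons True by simp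
      next
        case (Suc k') then show ?thesis using h(1) Cons True by simp
      qed
      then show ?thesis using h by (intro exI[of _ "Suc k"] exI[of _ d] exI[of _ e] exI[of _ v]) simp
    qed
  qed
qed

lemma const_bal:
  fixes w :: "nat list"
  assumes "set w \<subseteq> {d}" "count (mset w) 0 = count (mset w) 1" "d \<in> {0,1}"
  shows "w = []"
proof -
  have w: "w = replicate (length w) d" using assms(1) by (simp add: replicate_length_same subset_iff)
  have "count (mset (replicate (length w) d)) 0 = count (mset (replicate (length w) d)) 1"
    using assms(2) w by simp
  then show ?thesis using assms(3) by (cases "length w") auto
qed

lemma sublist_set: "sublist xs ys \<Longrightarrow> set xs \<subseteq> set ys"
  by (auto simp: sublist_def)

lemma E_del:
  fixes R :: rules
  assumes "(p, [0,1], p) \<in> R" "(p, [1,0], p) \<in> R" "Sigma_st R p = {[0,1],[1,0]}"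
    and y: "y = replicate k d @ [d, e] @ v" "d \<noteq> e" "d \<in> {0,1}" "e \<in> {0,1}"
  shows "grl_step R (t, p, y) (t @ replicate k d, p, v)"
proof -
  have r: "(p, [d, e], p) \<in> R" using assms(1,2) y(2-4) by auto
  have nf: "no_factor (Sigma_st R p) (replicate k d)"
    unfolding no_factor_def assms(3)
  proof
    assume "\<exists>w\<in>{[0, 1], [1, 0]}. sublist w (replicate k d)"
    then obtain w where "w \<in> {[0, 1], [1, 0]}" "set w \<subseteq> set (replicate k d)"
      using sublist_set by blast
    then show False by (cases "k = 0") auto
  qed
  have ov: "\<not> (\<exists>u1 u2 x1 x2. replicate k d = u1 @ u2 \<and> [d, e] = x1 @ x2 \<and> u2 \<noteq> [] \<and> x1 \<noteq> [] \<and> u2 @ x1 = [d, e])"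
  proof
    assume "\<exists>u1 u2 x1 x2. replicate k d = u1 @ u2 \<and> [d, e] = x1 @ x2 \<and> u2 \<noteq> [] \<and> x1 \<noteq> [] \<and> u2 @ x1 = [d, e]"
    then obtain u2 x1 x2 where h: "[d, e] = x1 @ x2" "u2 \<noteq> []" "x1 \<noteq> []" "u2 @ x1 = [d, e]" by blast
    from h(2,3,4) have "x1 = [e]"
      by (cases u2; cases x1) (auto simp: Cons_eq_append_conv append_eq_Cons_conv)
    with h(1) have "d = e" by simp
    with y(2) show False by simp
  qed
  show ?thesis unfolding y(1) by (rule grl_step.delete[OF r nf ov])
qed

lemma E_run:
  fixes R :: rules
  assumes r: "(p, [0,1], p) \<in> R" "(p, [1,0], p) \<in> R" "Sigma_st R p = {[0,1],[1,0]}"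
  shows "set (t @ y) \<subseteq> {0,1} \<Longrightarrow> count (mset (t @ y)) 0 = count (mset (t @ y)) 1 \<Longrightarrow>
    (grl_step R)\<^sup>*\<^sup>* (t, p, y) ([], p, [])"
proof (induction "length (t @ y)" arbitrary: t y rule: less_induct)
  case less
  show ?case
  proof (cases "\<exists>d. set y \<subseteq> {d}")
    case False
    have "set y \<subseteq> {0,1}" using less.prems(1) by simp
    from first_change[OF this False] obtain k d e v where
      h: "y = replicate k d @ [d, e] @ v" "d \<noteq> e" "d \<in> {0,1}" "e \<in> {0,1}" by blast
    have st: "grl_step R (t, p, y) (t @ replicate k d, p, v)" by (rule E_del[OF r h])
    have cnt: "count (mset ((t @ replicate k d) @ v)) 0 = count (mset ((t @ replicate k d) @ v)) 1"
      using less.prems(2) h by auto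
    have "(grl_step R)\<^sup>*\<^sup>* (t @ replicate k d, p, v) ([], p, [])"
      by (rule less.hyps) (use less.prems h cnt in auto)
    with st show ?thesis by (rule converse_rtranclp_into_rtranclp)
  next
    case True
    then obtain d where d: "set y \<subseteq> {d}" by blast
    show ?thesis
    proof (cases "t = []")
      case True
      show ?thesis
      proof (cases "y = []")
        case True with \<open>t = []\<close> show ?thesis by simp
      next
        case False
        then have "d \<in> set y" using d by (metis ex_in_conv singletonD subset_iff set_empty)
        then have "d \<in> {0,1}" using less.prems(1) by auto
        then have "y = []" using const_bal[OF d] less.prems(2) \<open>t = []\<close> by simp
        with False show ?thesis by simp
      qed
    next
      case False
      have nf: "no_factor (Sigma_st R p) y"
        unfolding no_factor_def r(3)
      proof
        assume "\<exists>w\<in>{[0, 1], [1, 0]}. sublist w y"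
        then obtain w where "w \<in> {[0, 1], [1, 0]}" "set w \<subseteq> set y" using sublist_set by blast
        then have "0 \<in> set y" "1 \<in> set y" by auto
        with d show False by (metis empty_iff insert_iff subsetD zero_neq_one)
      qed
      have st1: "grl_step R (t, p, y) ([], p, t @ y)" by (rule grl_step.wrap[OF False nf])
      have "\<not> (\<exists>d. set (t @ y) \<subseteq> {d})"
      proof
        assume "\<exists>d. set (t @ y) \<subseteq> {d}"
        then obtain d' where d': "set (t @ y) \<subseteq> {d'}" by blast
        have "hd t \<in> set (t @ y)" using False by simp
        then have "d' \<in> {0,1}" using d' less.prems(1) by auto
        from const_bal[OF d' less.prems(2) this] False show False by simp
      qed
      from first_change[OF less.prems(1) this] obtain k d e v where
        h: "t @ y = replicate k d @ [d, e] @ v" "d \<noteq> e" "d \<in> {0,1}" "e \<in> {0,1}" by blast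
      have st2: "grl_step R ([], p, t @ y) ([] @ replicate k d, p, v)" by (rule E_del[OF r h])
      have cnt: "count (mset (replicate k d @ v)) 0 = count (mset (replicate k d @ v)) 1"
        using less.prems(2) h by auto
      have "(grl_step R)\<^sup>*\<^sup>* (replicate k d, p, v) ([], p, [])"
        by (rule less.hyps) (use less.prems h cnt in auto)
      with st1 st2 show ?thesis by (simp add: converse_rtranclp_into_rtranclp)
    qed
  qed
qed




lemma inG: "is_GRLOWJFA S Q q0 F R \<Longrightarrow> L_GRL S q0 F R \<in> GRLOWJ"
  unfolding GRLOWJ_def by blast

lemma rpath_good:
  "rpath R p ys q \<Longrightarrow> p \<in> P \<Longrightarrow> (\<forall>a x b. (a, x, b) \<in> R \<longrightarrow> a \<in> P \<longrightarrow> b \<in> P \<and> G x) \<Longrightarrow>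
   (\<forall>x\<in>set ys. G x) \<and> q \<in> P"
proof (induction rule: rpath.induct)
  case (rpath_nil p) then show ?case by simp
next
  case (rpath_cons p x q xs r)
  then have "q \<in> P \<and> G x" by blast
  with rpath_cons show ?case by simp
qed

lemma bal_concat:
  "\<forall>x\<in>set ys. count (mset x) (0::nat) = count (mset x) 1 \<Longrightarrow>
   count (mset (concat ys)) 0 = count (mset (concat ys)) 1"
  by (induction ys) auto

lemma first_front:
  assumes "grl_step R ([], q, w) C'" "set w \<subseteq> A" "\<forall>a\<in>A. [a] \<in> Sigma_st R q"
  shows "\<exists>x v q'. w = x @ v \<and> (q, x, q') \<in> R \<and> C' = ([], q', v)"
proof -
  have "\<exists>x v q' u. w = u @ x @ v \<and> (q, x, q') \<in> R \<and> no_factor (Sigma_st R q) u \<and> C' = (u, q', v)"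
    using assms(1) by (cases rule: grl_step.cases) auto
  then obtain x v q' u where h: "w = u @ x @ v" "(q, x, q') \<in> R" "no_factor (Sigma_st R q) u"
    "C' = (u, q', v)" by blast
  have "u = []"
  proof (rule ccontr)
    assume "u \<noteq> []"
    then obtain a u' where u: "u = a # u'" by (cases u) auto
    then have "a \<in> A" using assms(2) h(1) by auto
    then have "[a] \<in> Sigma_st R q" using assms(3) by blast
    moreover have "sublist [a] u" unfolding u by simp
    ultimately show False using h(3) unfolding no_factor_def by blast
  qed
  then show ?thesis using h by auto
qed

lemma mset_single: "mset w = mset [a] \<Longrightarrow> w = [a]"
proof -
  assume h: "mset w = mset [a]"
  have "length w = length [a]" by (rule mset_eq_length[OF h])
  then obtain b where b: "w = [b]" by (auto simp: length_Suc_conv)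
  with h show ?thesis by simp
qed

definition RE :: rules where "RE = {(0, [0,1], 0), (0, [1,0], 0)}"

lemma ME_wf: "is_GRLOWJFA {0,1} {0} 0 {0} RE"
  unfolding is_GRLOWJFA_def RE_def by auto

lemma ME_lang: "L_GRL {0,1} 0 {0} RE = Elang"
proof
  show "L_GRL {0,1} 0 {0} RE \<subseteq> Elang"
  proof
    fix w assume "w \<in> L_GRL {0,1} 0 {0} RE"
    then have w: "set w \<subseteq> {0,1}" "(grl_step RE)\<^sup>*\<^sup>* ([], 0, w) ([], 0, [])"
      unfolding L_GRL_def by auto
    from run_path'[OF w(2)] obtain ys where ys: "rpath RE 0 ys 0" "mset w = mset (concat ys)" by auto
    have "\<forall>x\<in>set ys. count (mset x) (0::nat) = count (mset x) 1"
      using rpath_good[OF ys(1), of "{0}" "\<lambda>x. count (mset x) (0::nat) = count (mset x) 1"]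
      unfolding RE_def by auto
    from bal_concat[OF this] ys(2) w(1) show "w \<in> Elang" unfolding Elang_def by simp
  qed
next
  show "Elang \<subseteq> L_GRL {0,1} 0 {0} RE"
  proof
    fix w assume "w \<in> Elang"
    then have w: "set w \<subseteq> {0,1}" "count (mset w) 0 = count (mset w) 1" unfolding Elang_def by auto
    have "Sigma_st RE 0 = {[0,1],[1,0]}" unfolding Sigma_st_def RE_def by auto
    then have "(grl_step RE)\<^sup>*\<^sup>* ([], 0, w) ([], 0, [])"
      using E_run[of 0 RE "[]" w] w unfolding RE_def by simp
    then show "w \<in> L_GRL {0,1} 0 {0} RE" unfolding L_GRL_def using w by auto
  qed
qed

definition Rc :: rules where "Rc = {(0, [2], 1)}"

lemma Mc_wf: "is_GRLOWJFA {2} {0,1} 0 {1} Rc"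
  unfolding is_GRLOWJFA_def Rc_def by auto

lemma Mc_lang: "L_GRL {2} 0 {1} Rc = {[2]}"
proof
  show "L_GRL {2} 0 {1} Rc \<subseteq> {[2]}"
  proof
    fix w assume "w \<in> L_GRL {2} 0 {1} Rc"
    then have w: "(grl_step Rc)\<^sup>*\<^sup>* ([], 0, w) ([], 1, [])" unfolding L_GRL_def by auto
    from run_path'[OF w] obtain ys where ys: "rpath Rc 0 ys 1" "mset w = mset (concat ys)" by auto
    from ys(1) have "ys = [[2]]"
    proof (cases rule: rpath.cases)
      case (rpath_cons x q xs)
      have xq: "x = [2]" "q = 1" using rpath_cons(2) unfolding Rc_def by auto
      have "xs = []" using rpath_cons(3) unfolding xq(2)
        by (cases rule: rpath.cases) (auto simp: Rc_def)
      then show ?thesis using rpath_cons(1) xq by simp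
    qed simp
    with ys(2) have "mset w = mset [2]" by simp
    from mset_single[OF this] show "w \<in> {[2]}" by simp
  qed
next
  have "rpath Rc 0 [[2]] 1" by (rule rpath_single) (simp add: Rc_def)
  from front_run[OF _ this, of "[]" "[]"] have "(grl_step Rc)\<^sup>*\<^sup>* ([], 0, [2]) ([], 1, [])"
    unfolding Rc_def by simp
  then show "{[2]} \<subseteq> L_GRL {2} 0 {1} Rc" unfolding L_GRL_def by auto
qed




definition RcE :: rules where
  "RcE = {(0, [2], 1), (0, [0], 2), (0, [1], 2), (1, [0,1], 1), (1, [1,0], 1)}"

definition Lc :: "nat list set" where "Lc = {2 # w | w. w \<in> Elang}"

lemma McE_wf: "is_GRLOWJFA {0,1,2} {0,1,2} 0 {1} RcE"
  unfolding is_GRLOWJFA_def RcE_def by auto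

lemma McE_lang: "L_GRL {0,1,2} 0 {1} RcE = Lc"
proof
  show "L_GRL {0,1,2} 0 {1} RcE \<subseteq> Lc"
  proof
    fix w assume "w \<in> L_GRL {0,1,2} 0 {1} RcE"
    then have w: "set w \<subseteq> {0,1,2}" "(grl_step RcE)\<^sup>*\<^sup>* ([], 0, w) ([], 1, [])"
      unfolding L_GRL_def by auto
    from w(2) show "w \<in> Lc"
    proof (cases rule: converse_rtranclpE)
      case base then show ?thesis by simp
    next
      case (step C')
      have sg: "\<forall>a\<in>{0,1,2}. [a] \<in> Sigma_st RcE 0" unfolding Sigma_st_def RcE_def by auto
      from first_front[OF step(1) w(1) sg] obtain x v q' where
        h: "w = x @ v" "(0, x, q') \<in> RcE" "C' = ([], q', v)" by blast
      have r: "(grl_step RcE)\<^sup>*\<^sup>* ([], q', v) ([], 1, [])" using step(2) h(3) by simp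
      from run_path'[OF r] obtain ys where ys: "rpath RcE q' ys 1" "mset v = mset (concat ys)" by auto
      from h(2) have "(x = [2] \<and> q' = 1) \<or> q' = 2" unfolding RcE_def by auto
      then show ?thesis
      proof
        assume "q' = 2"
        with ys(1) have "rpath RcE 2 ys 1" by simp
        from rpath_good[OF this, of "{2}" "\<lambda>x. True"] show ?thesis unfolding RcE_def by auto
      next
        assume xq: "x = [2] \<and> q' = 1"
        with ys(1) have "rpath RcE 1 ys 1" by simp
        from rpath_good[OF this, of "{1}" "\<lambda>x. x = [0,1] \<or> x = [1,0]"]
        have g: "\<forall>x\<in>set ys. x = [0,1] \<or> x = [1,0]" unfolding RcE_def by auto
        then have "\<forall>x\<in>set ys. count (mset x) (0::nat) = count (mset x) 1" by auto
        from bal_concat[OF this] have b: "count (mset v) 0 = count (mset v) 1" using ys(2) by simp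
        have "set (concat ys) \<subseteq> {0,1}" using g by auto
        then have "set v \<subseteq> {0,1}" using ys(2) by (metis set_mset_mset)
        with b have "v \<in> Elang" unfolding Elang_def by simp
        then show ?thesis unfolding Lc_def using h(1) xq by simp
      qed
    qed
  qed
next
  show "Lc \<subseteq> L_GRL {0,1,2} 0 {1} RcE"
  proof
    fix w assume "w \<in> Lc"
    then obtain v where v: "w = 2 # v" "set v \<subseteq> {0,1}" "count (mset v) 0 = count (mset v) 1"
      unfolding Lc_def Elang_def by auto
    have s1: "grl_step RcE ([], 0, [2] @ v) ([], 1, v)"
      by (rule front_step) (auto simp: RcE_def Sigma_st_def)
    have "Sigma_st RcE 1 = {[0,1],[1,0]}" unfolding Sigma_st_def RcE_def by auto
    then have "(grl_step RcE)\<^sup>*\<^sup>* ([], 1, v) ([], 1, [])"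
      using E_run[of 1 RcE "[]" v] v unfolding RcE_def by simp
    with s1 have "(grl_step RcE)\<^sup>*\<^sup>* ([], 0, w) ([], 1, [])" using v(1)
      by (simp add: converse_rtranclp_into_rtranclp)
    moreover have "w \<in> lists {0,1,2}" using v by auto
    ultimately show "w \<in> L_GRL {0,1,2} 0 {1} RcE" unfolding L_GRL_def by auto
  qed
qed

lemma rev_Lc: "rev ` Lc = Ec"
proof
  show "rev ` Lc \<subseteq> Ec" unfolding Lc_def Ec_def Elang_def by auto
next
  show "Ec \<subseteq> rev ` Lc"
  proof
    fix w assume "w \<in> Ec"
    then obtain w0 where w: "w = w0 @ [2]" "set w0 \<subseteq> {0,1}" "count (mset w0) 0 = count (mset w0) 1"
      unfolding Ec_def by auto
    have "2 # rev w0 \<in> Lc" unfolding Lc_def Elang_def using w by auto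
    moreover have "w = rev (2 # rev w0)" using w by simp
    ultimately show "w \<in> rev ` Lc" by blast
  qed
qed

definition R1 :: rules where "R1 = {(0, [2], 1), (1, [0,1], 1), (1, [1,0], 1)}"
definition R2 :: rules where "R2 = {(0, [0], 0), (0, [1], 0), (0, [2], 1)}"

lemma M1_wf: "is_GRLOWJFA {0,1,2} {0,1} 0 {1} R1"
  unfolding is_GRLOWJFA_def R1_def by auto

lemma M2_wf: "is_GRLOWJFA {0,1,2} {0,1} 0 {1} R2"
  unfolding is_GRLOWJFA_def R2_def by auto

lemma M2_char:
  "(grl_step R2)\<^sup>*\<^sup>* ([], 0, w) ([], 1, []) \<Longrightarrow> set w \<subseteq> {0,1,2} \<Longrightarrow>
   \<exists>w0. w = w0 @ [2] \<and> set w0 \<subseteq> {0,1}"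
proof (induction w)
  case Nil
  from Nil(1) show ?case
  proof (cases rule: converse_rtranclpE)
    case base then show ?thesis by simp
  next
    case (step C')
    have sg: "\<forall>a\<in>{}. [a] \<in> Sigma_st R2 0" by simp
    from first_front[OF step(1) _ sg] obtain x v q' where "[] = x @ v" "(0, x, q') \<in> R2" by auto
    then show ?thesis unfolding R2_def by auto
  qed
next
  case (Cons a w')
  from Cons.prems(1) show ?case
  proof (cases rule: converse_rtranclpE)
    case base then show ?thesis by simp
  next
    case (step C')
    have sg: "\<forall>a\<in>{0,1,2}. [a] \<in> Sigma_st R2 0" unfolding Sigma_st_def R2_def by auto
    from first_front[OF step(1) Cons.prems(2) sg] obtain x v q' where
      h: "a # w' = x @ v" "(0, x, q') \<in> R2" "C' = ([], q', v)" by blast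
    have r: "(grl_step R2)\<^sup>*\<^sup>* ([], q', v) ([], 1, [])" using step(2) h(3) by simp
    from h(2) have "(x = [2] \<and> q' = 1) \<or> (x = [0] \<and> q' = 0) \<or> (x = [1] \<and> q' = 0)"
      unfolding R2_def by auto
    then show ?thesis
    proof (elim disjE)
      assume xq: "x = [2] \<and> q' = 1"
      from run_path'[OF r] xq obtain ys where ys: "rpath R2 1 ys 1" "mset v = mset (concat ys)" by auto
      from rpath_good[OF ys(1), of "{1}" "\<lambda>x. False"] have "ys = []" unfolding R2_def by auto
      with ys(2) have "v = []" by simp
      then show ?thesis using h(1) xq by (intro exI[of _ "[]"]) simp
    next
      assume xq: "x = [0] \<and> q' = 0"
      with h(1) have "a = 0" "v = w'" by auto
      with r xq have "(grl_step R2)\<^sup>*\<^sup>* ([], 0, w') ([], 1, [])" by simp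
      from Cons.IH[OF this] Cons.prems(2) obtain w0 where "w' = w0 @ [2]" "set w0 \<subseteq> {0,1}" by auto
      then show ?thesis using \<open>a = 0\<close> by (intro exI[of _ "a # w0"]) simp
    next
      assume xq: "x = [1] \<and> q' = 0"
      with h(1) have "a = 1" "v = w'" by auto
      with r xq have "(grl_step R2)\<^sup>*\<^sup>* ([], 0, w') ([], 1, [])" by simp
      from Cons.IH[OF this] Cons.prems(2) obtain w0 where "w' = w0 @ [2]" "set w0 \<subseteq> {0,1}" by auto
      then show ?thesis using \<open>a = 1\<close> by (intro exI[of _ "a # w0"]) simp
    qed
  qed
qed

lemma R2_path: "set w0 \<subseteq> {0,1} \<Longrightarrow> rpath R2 0 (map (\<lambda>a. [a]) w0) 0"
proof (induction w0)
  case Nil then show ?case by (simp add: rpath_nil)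
next
  case (Cons a w0)
  have "(0, [a], 0) \<in> R2" using Cons.prems unfolding R2_def by auto
  then show ?case using Cons by (auto intro: rpath_cons)
qed

lemma inter_lang: "L_GRL {0,1,2} 0 {1} R1 \<inter> L_GRL {0,1,2} 0 {1} R2 = Ec"
proof
  show "L_GRL {0,1,2} 0 {1} R1 \<inter> L_GRL {0,1,2} 0 {1} R2 \<subseteq> Ec"
  proof
    fix w assume "w \<in> L_GRL {0,1,2} 0 {1} R1 \<inter> L_GRL {0,1,2} 0 {1} R2"
    then have w: "set w \<subseteq> {0,1,2}" "(grl_step R1)\<^sup>*\<^sup>* ([], 0, w) ([], 1, [])"
      "(grl_step R2)\<^sup>*\<^sup>* ([], 0, w) ([], 1, [])" unfolding L_GRL_def by auto
    from M2_char[OF w(3) w(1)] obtain w0 where w0: "w = w0 @ [2]" "set w0 \<subseteq> {0,1}" by blast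
    from run_path'[OF w(2)] obtain ys where ys: "rpath R1 0 ys 1" "mset w = mset (concat ys)" by auto
    from rpath_good[OF ys(1), of "{0,1}" "\<lambda>x. count (mset x) (0::nat) = count (mset x) 1"]
    have "\<forall>x\<in>set ys. count (mset x) (0::nat) = count (mset x) 1" unfolding R1_def by auto
    from bal_concat[OF this] ys(2) have "count (mset w) 0 = count (mset w) 1" by simp
    then have "count (mset w0) 0 = count (mset w0) 1" using w0(1) by simp
    then show "w \<in> Ec" unfolding Ec_def using w0 by auto
  qed
next
  show "Ec \<subseteq> L_GRL {0,1,2} 0 {1} R1 \<inter> L_GRL {0,1,2} 0 {1} R2"
  proof
    fix w assume "w \<in> Ec"
    then obtain w0 where w0: "w = w0 @ [2]" "set w0 \<subseteq> {0,1}" "count (mset w0) 0 = count (mset w0) 1"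
      unfolding Ec_def by auto
    have lw: "w \<in> lists {0,1,2}" using w0 by auto
    have "rpath R2 0 (map (\<lambda>a. [a]) w0 @ [[2]]) 1"
      by (rule rpath_append[OF R2_path[OF w0(2)]]) (rule rpath_single, simp add: R2_def)
    from front_run[OF _ this, of "[]" "[]"]
    have "(grl_step R2)\<^sup>*\<^sup>* ([], 0, w) ([], 1, [])" using w0(1) unfolding R2_def by simp
    then have m2: "w \<in> L_GRL {0,1,2} 0 {1} R2" unfolding L_GRL_def using lw by auto
    have nf: "no_factor (Sigma_st R1 0) w0"
    proof -
      have "Sigma_st R1 0 = {[2]}" unfolding Sigma_st_def R1_def by auto
      moreover have "\<not> sublist [2] w0" using w0(2) sublist_set by fastforce
      ultimately show ?thesis unfolding no_factor_def by auto
    qed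
    have ov: "\<not> (\<exists>u1 u2 x1 x2. w0 = u1 @ u2 \<and> [2::nat] = x1 @ x2 \<and> u2 \<noteq> [] \<and> x1 \<noteq> [] \<and> u2 @ x1 = [2])"
    proof
      assume "\<exists>u1 u2 x1 x2. w0 = u1 @ u2 \<and> [2::nat] = x1 @ x2 \<and> u2 \<noteq> [] \<and> x1 \<noteq> [] \<and> u2 @ x1 = [2]"
      then obtain u2 x1 where "u2 \<noteq> []" "x1 \<noteq> []" "u2 @ x1 = [2::nat]" by blast
      then have "length (u2 @ x1) \<ge> 2" by (cases u2; cases x1) auto
      with \<open>u2 @ x1 = [2::nat]\<close> show False by simp
    qed
    have "grl_step R1 ([], 0, w0 @ [2] @ []) ([] @ w0, 1, [])"
      by (rule grl_step.delete[OF _ nf ov]) (simp add: R1_def)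
    then have s1: "grl_step R1 ([], 0, w) (w0, 1, [])" using w0(1) by simp
    have "Sigma_st R1 1 = {[0,1],[1,0]}" unfolding Sigma_st_def R1_def by auto
    then have "(grl_step R1)\<^sup>*\<^sup>* (w0, 1, []) ([], 1, [])"
      using E_run[of 1 R1 w0 "[]"] w0 unfolding R1_def by simp
    with s1 have "(grl_step R1)\<^sup>*\<^sup>* ([], 0, w) ([], 1, [])"
      by (simp add: converse_rtranclp_into_rtranclp)
    then have m1: "w \<in> L_GRL {0,1,2} 0 {1} R1" unfolding L_GRL_def using lw by auto
    from m1 m2 show "w \<in> L_GRL {0,1,2} 0 {1} R1 \<inter> L_GRL {0,1,2} 0 {1} R2" by blast
  qed
qed

lemma conc_E: "conc Elang {[2]} = Ec"
  unfolding conc_def Elang_def Ec_def by auto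

theorem proposition6:
  shows "(\<exists>L1 \<in> (GRLOWJ :: nat list set set). \<exists>L2 \<in> GRLOWJ. L1 \<inter> L2 \<notin> GRLOWJ)
       \<and> (\<exists>L1 \<in> (GRLOWJ :: nat list set set). \<exists>L2 \<in> GRLOWJ. conc L1 L2 \<notin> GRLOWJ)
       \<and> (\<exists>L \<in> (GRLOWJ :: nat list set set). rev ` L \<notin> GRLOWJ)"
proof (intro conjI)
  show "\<exists>L1 \<in> (GRLOWJ :: nat list set set). \<exists>L2 \<in> GRLOWJ. L1 \<inter> L2 \<notin> GRLOWJ"
    using inG[OF M1_wf] inG[OF M2_wf] inter_lang Ec_notin by metis
  show "\<exists>L1 \<in> (GRLOWJ :: nat list set set). \<exists>L2 \<in> GRLOWJ. conc L1 L2 \<notin> GRLOWJ"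
    using inG[OF ME_wf] inG[OF Mc_wf] ME_lang Mc_lang conc_E Ec_notin by metis
  show "\<exists>L \<in> (GRLOWJ :: nat list set set). rev ` L \<notin> GRLOWJ"
    using inG[OF McE_wf] McE_lang rev_Lc Ec_notin by metis
qed



end
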